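(* Let $0<\delta<\frac12$ and let $G$ be a subgroup of $\mathrm{Diff}_0^3(I)$ satisfying condition (a): there exists $c>0$ such that for all $g_1\ne g_2$ in $G$, $\sup_{t\in[0,1]}|\log(g_1'(t))-\log(g_2'(t))|\ge c$. Define $r_\delta(f)=\inf_{h\in G}p_\delta(h^{-1}\circ f)$ for $f\in\mathrm{Diff}_+^{1,\delta}(I)$. Then the functions $p_\delta$ and $r_\delta$ are continuous from $\mathrm{Diff}_+^{1,\delta}(I)$ (with the norm $\|\cdot\|_{1,\delta}$) to $\mathbb{R}$.
   Context: $I=[0,1]$. $\mathrm{Diff}_+^1(I)$ is the set of $C^1$ diffeomorphisms of $I$ fixing $0$ and $1$. $C_0^{1,\delta}(I)$ is the set of continuously differentiable $f:I\to\mathbb{R}$ with $f(0)=0$ and $f'$ Hölder of exponent $\delta$, normed by $\|f\|_{1,\delta}=|f'(0)|+\sup_{t_1\ne t_2}\frac{|f'(t_2)-f'(t_1)|}{|t_2-t_1|^\delta}$; $\mathrm{Diff}_+^{1,\delta}(I)=\mathrm{Diff}_+^1(I)\cap C_0^{1,\delta}(I)$ with this norm. $\mathrm{Diff}_0^3(I)$ is the set of $C^3$ diffeomorphisms $f$ of $I$ fixing $0$ and $1$ with $f'(0)=f'(1)=1$. For $f\in\mathrm{Diff}_+^{1,\delta}(I)$, $p_\delta(f)=|\log(f'(0))|+\sup_{t_1\ne t_2\in I}\frac{|\log(f'(t_2))-\log(f'(t_1))|}{|t_2-t_1|^\delta}$. *)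

theory Defs
  imports "HOL-Analysis.Analysis"
begin

text \<open>The interval I = [0,1]; all functions are real functions, only their
  values on I matter. Derivatives are one-sided at the endpoints (derivative
  within I).\<close>

abbreviation II :: "real set" where "II \<equiv> {0..1}"

definition D :: "(real \<Rightarrow> real) \<Rightarrow> real \<Rightarrow> real" where
  "D f t = vector_derivative f (at t within II)"

definition C1_on_I :: "(real \<Rightarrow> real) \<Rightarrow> bool" where
  "C1_on_I f \<longleftrightarrow> (\<forall>t\<in>II. f differentiable (at t within II)) \<and> continuous_on II (D f)"

definition C3_on_I :: "(real \<Rightarrow> real) \<Rightarrow> bool" where
  "C3_on_I f \<longleftrightarrow> C1_on_I f \<and> C1_on_I (D f) \<and> C1_on_I (D (D f))"

definition Diff1 :: "(real \<Rightarrow> real) set" where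
  "Diff1 = {f. bij_betw f II II \<and> C1_on_I f \<and> C1_on_I (inv_into II f) \<and> f 0 = 0 \<and> f 1 = 1}"

definition Diff03 :: "(real \<Rightarrow> real) set" where
  "Diff03 = {f. bij_betw f II II \<and> C3_on_I f \<and> C3_on_I (inv_into II f) \<and> f 0 = 0 \<and> f 1 = 1
               \<and> D f 0 = 1 \<and> D f 1 = 1}"

definition holder_quots :: "real \<Rightarrow> (real \<Rightarrow> real) \<Rightarrow> real set" where
  "holder_quots \<delta> u = {\<bar>u t2 - u t1\<bar> / \<bar>t2 - t1\<bar> powr \<delta> | t1 t2. t1 \<in> II \<and> t2 \<in> II \<and> t1 \<noteq> t2}"

definition C01d :: "real \<Rightarrow> (real \<Rightarrow> real) set" where
  "C01d \<delta> = {f. C1_on_I f \<and> f 0 = 0 \<and> bdd_above (holder_quots \<delta> (D f))}"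

definition norm1d :: "real \<Rightarrow> (real \<Rightarrow> real) \<Rightarrow> real" where
  "norm1d \<delta> f = \<bar>D f 0\<bar> + Sup (holder_quots \<delta> (D f))"

definition Diff1d :: "real \<Rightarrow> (real \<Rightarrow> real) set" where
  "Diff1d \<delta> = Diff1 \<inter> C01d \<delta>"

definition p_delta :: "real \<Rightarrow> (real \<Rightarrow> real) \<Rightarrow> real" where
  "p_delta \<delta> f = \<bar>ln (D f 0)\<bar> + Sup (holder_quots \<delta> (\<lambda>t. ln (D f t)))"

text \<open>G is a subgroup of Diff^3_0(I) (group law = composition on I;
  elements identified when they agree on I).\<close>
definition subgroup_Diff03 :: "(real \<Rightarrow> real) set \<Rightarrow> bool" where
  "subgroup_Diff03 G \<longleftrightarrow> G \<subseteq> Diff03 \<and> (\<exists>e\<in>G. \<forall>t\<in>II. e t = t)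
     \<and> (\<forall>g\<in>G. \<forall>h\<in>G. \<exists>k\<in>G. \<forall>t\<in>II. k t = g (h t))
     \<and> (\<forall>g\<in>G. \<exists>k\<in>G. \<forall>t\<in>II. k t = inv_into II g t)"

definition cond_a :: "(real \<Rightarrow> real) set \<Rightarrow> bool" where
  "cond_a G \<longleftrightarrow> (\<exists>c>0. \<forall>g1\<in>G. \<forall>g2\<in>G. (\<exists>t\<in>II. g1 t \<noteq> g2 t) \<longrightarrow>
      Sup ((\<lambda>t. \<bar>ln (D g1 t) - ln (D g2 t)\<bar>) ` II) \<ge> c)"

definition r_delta :: "real \<Rightarrow> (real \<Rightarrow> real) set \<Rightarrow> (real \<Rightarrow> real) \<Rightarrow> real" where
  "r_delta \<delta> G f = Inf ((\<lambda>h. p_delta \<delta> (inv_into II h \<circ> f)) ` G)"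

definition cont_1d :: "real \<Rightarrow> ((real \<Rightarrow> real) \<Rightarrow> real) \<Rightarrow> bool" where
  "cont_1d \<delta> F \<longleftrightarrow> (\<forall>f\<in>Diff1d \<delta>. \<forall>\<epsilon>>0. \<exists>\<eta>>0. \<forall>g\<in>Diff1d \<delta>.
      norm1d \<delta> (\<lambda>t. g t - f t) < \<eta> \<longrightarrow> \<bar>F g - F f\<bar> < \<epsilon>)"

end

theory Submission
  imports Defs
begin


abbreviation hn :: "real \<Rightarrow> (real \<Rightarrow> real) \<Rightarrow> real" where
  "hn \<delta> u \<equiv> Sup (holder_quots \<delta> u)"

definition Hol :: "real \<Rightarrow> (real \<Rightarrow> real) \<Rightarrow> real \<Rightarrow> bool" where
  "Hol \<delta> u K \<longleftrightarrow> (\<forall>t1\<in>II. \<forall>t2\<in>II. \<bar>u t2 - u t1\<bar> \<le> K * \<bar>t2 - t1\<bar> powr \<delta>)"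

lemma hq_mem: "t1 \<in> II \<Longrightarrow> t2 \<in> II \<Longrightarrow> t1 \<noteq> t2 \<Longrightarrow>
   \<bar>u t2 - u t1\<bar> / \<bar>t2 - t1\<bar> powr \<delta> \<in> holder_quots \<delta> u"
  unfolding holder_quots_def by blast

lemma hq_ne: "holder_quots \<delta> u \<noteq> {}"
  using hq_mem[of 0 1 u \<delta>] by force

lemma hq_le: assumes "Hol \<delta> u K" "x \<in> holder_quots \<delta> u" shows "x \<le> K"
proof -
  obtain t1 t2 where t: "x = \<bar>u t2 - u t1\<bar> / \<bar>t2 - t1\<bar> powr \<delta>" "t1 \<in> II" "t2 \<in> II" "t1 \<noteq> t2"
    using assms(2) unfolding holder_quots_def by blast
  have "\<bar>t2 - t1\<bar> powr \<delta> > 0" using t by simp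
  moreover have "\<bar>u t2 - u t1\<bar> \<le> K * \<bar>t2 - t1\<bar> powr \<delta>" using assms(1) t unfolding Hol_def by blast
  ultimately show ?thesis using t(1) by (simp add: divide_le_eq)
qed

lemma hq_bdd: "Hol \<delta> u K \<Longrightarrow> bdd_above (holder_quots \<delta> u)"
  using hq_le unfolding bdd_above_def by blast

lemma hn_le: "Hol \<delta> u K \<Longrightarrow> hn \<delta> u \<le> K"
  by (rule cSup_least[OF hq_ne]) (rule hq_le)

lemma hn_Hol: assumes "bdd_above (holder_quots \<delta> u)" shows "Hol \<delta> u (hn \<delta> u)"
  unfolding Hol_def
proof (intro ballI)
  fix t1 t2 :: real assume t: "t1 \<in> II" "t2 \<in> II"
  show "\<bar>u t2 - u t1\<bar> \<le> hn \<delta> u * \<bar>t2 - t1\<bar> powr \<delta>"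
  proof (cases "t1 = t2")
    case True then show ?thesis by simp
  next
    case False
    have q: "\<bar>u t2 - u t1\<bar> / \<bar>t2 - t1\<bar> powr \<delta> \<in> holder_quots \<delta> u"
      unfolding holder_quots_def using t False by blast
    have "\<bar>u t2 - u t1\<bar> / \<bar>t2 - t1\<bar> powr \<delta> \<le> hn \<delta> u" by (rule cSup_upper[OF q assms])
    moreover have "\<bar>t2 - t1\<bar> powr \<delta> > 0" using False by simp
    ultimately show ?thesis by (simp add: divide_le_eq)
  qed
qed

lemma hn_nonneg: assumes "bdd_above (holder_quots \<delta> u)" shows "0 \<le> hn \<delta> u"
proof -
  have q: "\<bar>u 1 - u 0\<bar> / \<bar>1 - 0\<bar> powr \<delta> \<in> holder_quots \<delta> u"
    by (rule hq_mem) auto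
  have "0 \<le> \<bar>u 1 - u 0\<bar> / \<bar>1 - 0\<bar> powr \<delta>" by simp
  also have "\<dots> \<le> hn \<delta> u" by (rule cSup_upper[OF q assms])
  finally show ?thesis .
qed

lemma Hol_bdd_iff: "bdd_above (holder_quots \<delta> u) \<longleftrightarrow> (\<exists>K. Hol \<delta> u K)"
  using hq_bdd hn_Hol by metis

lemma Hol_add: "Hol \<delta> u K \<Longrightarrow> Hol \<delta> v L \<Longrightarrow> Hol \<delta> (\<lambda>t. u t + v t) (K + L)"
  unfolding Hol_def
proof (intro ballI)
  fix t1 t2 assume a: "\<forall>t1\<in>II. \<forall>t2\<in>II. \<bar>u t2 - u t1\<bar> \<le> K * \<bar>t2 - t1\<bar> powr \<delta>"
    "\<forall>t1\<in>II. \<forall>t2\<in>II. \<bar>v t2 - v t1\<bar> \<le> L * \<bar>t2 - t1\<bar> powr \<delta>" and t: "t1 \<in> II" "t2 \<in> II"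
  have "\<bar>u t2 - u t1\<bar> \<le> K * \<bar>t2 - t1\<bar> powr \<delta>" "\<bar>v t2 - v t1\<bar> \<le> L * \<bar>t2 - t1\<bar> powr \<delta>"
    using a t by auto
  then show "\<bar>u t2 + v t2 - (u t1 + v t1)\<bar> \<le> (K + L) * \<bar>t2 - t1\<bar> powr \<delta>"
    by (simp add: distrib_right abs_triangle_ineq[THEN order_trans] ) 
qed

lemma Hol_cong: "(\<And>t. t \<in> II \<Longrightarrow> u t = v t) \<Longrightarrow> Hol \<delta> u K = Hol \<delta> v K"
  unfolding Hol_def by auto

lemma hq_cong: "(\<And>t. t \<in> II \<Longrightarrow> u t = v t) \<Longrightarrow> holder_quots \<delta> u = holder_quots \<delta> v"
  unfolding holder_quots_def by (intro Collect_cong) (metis)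

lemma Hol_mono: "Hol \<delta> u K \<Longrightarrow> K \<le> L \<Longrightarrow> Hol \<delta> u L"
  unfolding Hol_def by (meson mult_right_mono order_trans powr_ge_zero)

lemma powr_le_1: "t \<in> II \<Longrightarrow> 0 < \<delta> \<Longrightarrow> t powr \<delta> \<le> (1::real)"
  by (simp add: powr_le1)

lemma abs_diff_II: "t1 \<in> II \<Longrightarrow> t2 \<in> II \<Longrightarrow> \<bar>t2 - t1\<bar> \<in> II" by auto

lemma lin_le_powr: assumes "t1 \<in> II" "t2 \<in> II" "0 < \<delta>" "\<delta> \<le> 1"
  shows "\<bar>t2 - t1\<bar> \<le> \<bar>t2 - t1\<bar> powr \<delta>"
proof (cases "t1 = t2")
  case False
  have "\<bar>t2 - t1\<bar> powr 1 \<le> \<bar>t2 - t1\<bar> powr \<delta>"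
    by (rule powr_mono') (use assms False in auto)
  then show ?thesis using False by simp
qed simp

lemma Hol_of_Lip: assumes "\<And>t1 t2. t1 \<in> II \<Longrightarrow> t2 \<in> II \<Longrightarrow> \<bar>u t2 - u t1\<bar> \<le> L * \<bar>t2 - t1\<bar>"
  "0 \<le> L" "0 < \<delta>" "\<delta> \<le> 1"
  shows "Hol \<delta> u L"
  unfolding Hol_def using assms lin_le_powr[OF _ _ assms(3,4)]
  by (meson mult_left_mono order_trans)

lemma Hol_K_nonneg: assumes "Hol \<delta> u K" shows "0 \<le> K"
proof -
  have z: "(0::real) \<in> II" "(1::real) \<in> II" by auto
  have "\<bar>u 1 - u 0\<bar> \<le> K * \<bar>1 - 0\<bar> powr \<delta>" using assms z unfolding Hol_def by blast
  then show ?thesis by simp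
qed

lemma Hol_sup: assumes "Hol \<delta> u K" "t \<in> II" "0 < \<delta>" shows "\<bar>u t - u 0\<bar> \<le> K"
proof -
  have z: "(0::real) \<in> II" by simp
  have "\<bar>u t - u 0\<bar> \<le> K * \<bar>t - 0\<bar> powr \<delta>" using assms(1) z assms(2) unfolding Hol_def by blast
  also have "\<dots> \<le> K * 1"
    by (rule mult_left_mono) (use powr_le_1[OF _ assms(3)] assms(2) Hol_K_nonneg[OF assms(1)] in auto)
  finally show ?thesis by simp
qed




lemma D_unique: "t \<in> II \<Longrightarrow> (f has_real_derivative v) (at t within II) \<Longrightarrow> D f t = v"
  unfolding D_def has_real_derivative_iff_has_vector_derivative
  by (rule vector_derivative_within_closed_interval) auto

lemma C1_deriv: "C1_on_I f \<Longrightarrow> t \<in> II \<Longrightarrow> (f has_real_derivative D f t) (at t within II)"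
  unfolding C1_on_I_def D_def has_real_derivative_iff_has_vector_derivative
  using vector_derivative_works by blast

lemma C1_cont: "C1_on_I f \<Longrightarrow> continuous_on II (D f)"
  unfolding C1_on_I_def by blast

lemma D_cong: assumes "\<And>x. x \<in> II \<Longrightarrow> a x = b x" "t \<in> II" shows "D a t = D b t"
proof -
  have "\<And>v. (a has_vector_derivative v) (at t within II) = (b has_vector_derivative v) (at t within II)"
    by (rule has_vector_derivative_cong_ev) (use assms in auto)
  then show ?thesis unfolding D_def vector_derivative_def by simp
qed

lemma chain_II: assumes "(g has_real_derivative a) (at t within II)"
  "(k has_real_derivative b) (at (g t) within II)" "g ` II \<subseteq> II"
  shows "((\<lambda>x. k (g x)) has_real_derivative b * a) (at t within II)"
proof -
  have "(k has_vector_derivative b) (at (g t) within g ` II)"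
    using assms(2,3) has_vector_derivative_within_subset
    unfolding has_real_derivative_iff_has_vector_derivative by blast
  from vector_diff_chain_within[OF assms(1)[unfolded has_real_derivative_iff_has_vector_derivative] this]
  show ?thesis unfolding has_real_derivative_iff_has_vector_derivative o_def by (simp add: mult.commute)
qed

lemma mvt_II: assumes "a \<in> II" "b \<in> II" "a \<le> b"
  "\<And>x. x \<in> II \<Longrightarrow> (f has_real_derivative f' x) (at x within II)"
  shows "\<exists>\<xi>\<in>{a..b}. f b - f a = f' \<xi> * (b - a)"
proof -
  have "\<exists>\<xi>\<in>{a..b}. f b - f a = (\<lambda>h. f' \<xi> * h) (b - a)"
  proof (rule mvt_very_simple[OF assms(3)])
    fix x assume x: "a \<le> x" "x \<le> b"
    then have "x \<in> II" using assms by auto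
    then have "(f has_real_derivative f' x) (at x within {a..b})"
      using assms(4) has_field_derivative_subset[of f "f' x" x II "{a..b}"] assms(1,2) by auto
    then show "(f has_derivative (\<lambda>h. f' x * h)) (at x within {a..b})"
      unfolding has_field_derivative_def .
  qed
  then show ?thesis by simp
qed

lemma Diff1_img: "f \<in> Diff1 \<Longrightarrow> f ` II = II"
  unfolding Diff1_def bij_betw_def by blast

lemma Diff1_pos: assumes f: "f \<in> Diff1" and t: "t \<in> II" shows "D f t > 0"
proof -
  let ?g = "inv_into II f"
  have bij: "bij_betw f II II" and c1: "C1_on_I f" and c1g: "C1_on_I ?g" and f01: "f 0 = 0" "f 1 = 1"
    using f unfolding Diff1_def by auto
  have img: "f ` II \<subseteq> II" using Diff1_img[OF f] by simp
  have nz: "D f s \<noteq> 0" if s: "s \<in> II" for s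
  proof
    assume z: "D f s = 0"
    have fs: "f s \<in> II" using img s by blast
    have "((\<lambda>x. ?g (f x)) has_real_derivative D ?g (f s) * D f s) (at s within II)"
      by (rule chain_II[OF C1_deriv[OF c1 s] C1_deriv[OF c1g fs] img])
    moreover have "\<And>x. x \<in> II \<Longrightarrow> ?g (f x) = x"
      using bij by (simp add: bij_betw_def)
    ultimately have "((\<lambda>x. x) has_real_derivative D ?g (f s) * D f s) (at s within II)"
      using has_vector_derivative_cong_ev[of II "\<lambda>x. ?g (f x)" "\<lambda>x. x" s] s
      unfolding has_real_derivative_iff_has_vector_derivative by simp
    then have "D (\<lambda>x. x) s = 0" using D_unique[OF s] z by simp
    moreover have "D (\<lambda>x. x) s = 1" by (rule D_unique[OF s]) (rule derivative_eq_intros, simp)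
    ultimately show False by simp
  qed
  obtain \<xi> where \<xi>: "\<xi> \<in> II" "f 1 - f 0 = D f \<xi> * (1 - 0)"
    using mvt_II[of 0 1 f "D f"] C1_deriv[OF c1] by auto
  have p\<xi>: "D f \<xi> > 0" using \<xi> f01 by simp
  show ?thesis
  proof (rule ccontr)
    assume "\<not> D f t > 0" then have neg: "D f t < 0" using nz[OF t] by linarith
    have cont: "continuous_on {a..b} (D f)" if "a \<in> II" "b \<in> II" for a b
      using continuous_on_subset[OF C1_cont[OF c1]] that by auto
    show False
    proof (cases "t \<le> \<xi>")
      case True
      obtain x where "x \<ge> t" "x \<le> \<xi>" "D f x = 0"
        using IVT'[of "D f" t 0 \<xi>] neg p\<xi> True cont[OF t \<xi>(1)] by auto
      then show False using nz t \<xi>(1) by auto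
    next
      case False
      obtain x where "x \<ge> \<xi>" "x \<le> t" "D f x = 0"
        using IVT2'[of "D f" t 0 \<xi>] neg p\<xi> False cont[OF \<xi>(1) t] by auto
      then show False using nz t \<xi>(1) by auto
    qed
  qed
qed




lemma ln_diff_le: assumes "(x::real) > 0" "y > 0" shows "\<bar>ln x - ln y\<bar> \<le> \<bar>x - y\<bar> / min x y"
proof (cases "x \<le> y")
  case True
  have "ln y - ln x = ln (y / x)" using assms by (simp add: ln_div)
  also have "\<dots> \<le> y / x - 1" by (rule ln_le_minus_one) (use assms in simp)
  also have "\<dots> = (y - x) / x" using assms by (simp add: field_simps)
  finally have "ln y - ln x \<le> (y - x) / x" .
  moreover have "ln x \<le> ln y" using True assms by simp
  ultimately show ?thesis using True by (simp add: abs_if min_def)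
next
  case False
  have "ln x - ln y = ln (x / y)" using assms by (simp add: ln_div)
  also have "\<dots> \<le> x / y - 1" by (rule ln_le_minus_one) (use assms in simp)
  also have "\<dots> = (x - y) / y" using assms by (simp add: field_simps)
  finally have "ln x - ln y \<le> (x - y) / y" .
  moreover have "ln y \<le> ln x" using False assms by simp
  ultimately show ?thesis using False by (simp add: abs_if min_def)
qed

lemma cont_min: fixes h :: "real \<Rightarrow> real" assumes "continuous_on II h" "\<And>t. t \<in> II \<Longrightarrow> h t > 0"
  shows "\<exists>m>0. \<forall>t\<in>II. m \<le> h t"
proof -
  obtain x where x: "x \<in> II" "\<forall>y\<in>II. h x \<le> h y"
    using continuous_attains_inf[of II h] assms(1) by auto
  then show ?thesis using assms(2)[OF x(1)] by blast
qed

lemma cont_max: fixes h :: "real \<Rightarrow> real" assumes "continuous_on II h"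
  shows "\<exists>M. \<forall>t\<in>II. \<bar>h t\<bar> \<le> M"
proof -
  have "compact (h ` II)" by (rule compact_continuous_image[OF assms]) simp
  then obtain M where "\<forall>y\<in>h ` II. norm y \<le> M" using compact_imp_bounded bounded_iff by metis
  then show ?thesis by auto
qed

lemma Diff1d_facts: assumes "g \<in> Diff1d \<delta>"
  shows "C1_on_I g" "g 0 = 0" "g 1 = 1" "g ` II = II" "\<And>t. t \<in> II \<Longrightarrow> D g t > 0"
    "bdd_above (holder_quots \<delta> (D g))" "g \<in> Diff1"
  using assms Diff1_img Diff1_pos unfolding Diff1d_def C01d_def Diff1_def by auto

lemma Lip_deriv: assumes "\<And>x. x \<in> II \<Longrightarrow> (\<phi> has_real_derivative \<phi>' x) (at x within II)"
  "\<And>x. x \<in> II \<Longrightarrow> \<bar>\<phi>' x\<bar> \<le> B" "t1 \<in> II" "t2 \<in> II"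
  shows "\<bar>\<phi> t2 - \<phi> t1\<bar> \<le> B * \<bar>t2 - t1\<bar>"
proof -
  have *: "\<bar>\<phi> b - \<phi> a\<bar> \<le> B * \<bar>b - a\<bar>" if ab: "a \<in> II" "b \<in> II" "a \<le> b" for a b
  proof -
    obtain \<xi> where \<xi>: "\<xi> \<in> {a..b}" "\<phi> b - \<phi> a = \<phi>' \<xi> * (b - a)"
      using mvt_II[OF ab assms(1)] by blast
    have "\<xi> \<in> II" using \<xi>(1) ab by auto
    then have "\<bar>\<phi>' \<xi>\<bar> \<le> B" by (rule assms(2))
    then show ?thesis using \<xi>(2) by (simp add: abs_mult mult_right_mono)
  qed
  show ?thesis
  proof (cases "t1 \<le> t2")
    case True then show ?thesis using *[OF assms(3,4)] by simp
  next
    case False then show ?thesis using *[OF assms(4,3)] by (simp add: abs_minus_commute)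
  qed
qed

lemma lnD_Hol: assumes "\<And>t. t \<in> II \<Longrightarrow> m \<le> h t" "m > 0" "Hol \<delta> h H"
  shows "Hol \<delta> (\<lambda>t. ln (h t)) (H / m)"
  unfolding Hol_def
proof (intro ballI)
  fix t1 t2 :: real assume t: "t1 \<in> II" "t2 \<in> II"
  have p: "h t1 > 0" "h t2 > 0" using assms(1,2) t by (auto intro: less_le_trans)
  have "\<bar>ln (h t2) - ln (h t1)\<bar> \<le> \<bar>h t2 - h t1\<bar> / min (h t2) (h t1)" by (rule ln_diff_le[OF p(2,1)])
  also have "\<dots> \<le> \<bar>h t2 - h t1\<bar> / m"
    by (rule divide_left_mono) (use assms(1,2) t p in auto)
  also have "\<dots> \<le> H * \<bar>t2 - t1\<bar> powr \<delta> / m"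
    by (rule divide_right_mono) (use assms(2,3) t in \<open>auto simp: Hol_def\<close>)
  finally show "\<bar>ln (h t2) - ln (h t1)\<bar> \<le> H / m * \<bar>t2 - t1\<bar> powr \<delta>" by simp
qed

definition nice :: "(real \<Rightarrow> real) \<Rightarrow> bool" where
  "nice k \<longleftrightarrow> (\<forall>x\<in>II. k x \<in> II) \<and> (\<forall>x\<in>II. (k has_real_derivative D k x) (at x within II))
    \<and> (\<forall>x\<in>II. D k x > 0) \<and> (\<exists>u' L1 L2. (\<forall>x\<in>II. ((\<lambda>x. ln (D k x)) has_real_derivative u' x) (at x within II))
        \<and> (\<forall>x\<in>II. \<bar>u' x\<bar> \<le> L1) \<and> (\<forall>x\<in>II. \<forall>y\<in>II. \<bar>u' x - u' y\<bar> \<le> L2 * \<bar>x - y\<bar>))"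

lemma nice_id: "nice (\<lambda>x. x)"
proof -
  have d: "D (\<lambda>x. x) x = 1" if "x \<in> II" for x
    by (rule D_unique[OF that]) (rule derivative_eq_intros, simp)
  have "((\<lambda>x. ln (D (\<lambda>x. x) x)) has_real_derivative 0) (at x within II)" if "x \<in> II" for x
  proof -
    have "((\<lambda>x. 0::real) has_real_derivative 0) (at x within II)" by simp
    moreover have "\<forall>y\<in>II. ln (D (\<lambda>x. x) y) = 0" using d by simp
    ultimately show ?thesis
      using has_vector_derivative_cong_ev[of II "\<lambda>x. ln (D (\<lambda>x. x) x)" "\<lambda>x. 0" x 0] that
      unfolding has_real_derivative_iff_has_vector_derivative by simp
  qed
  moreover have "((\<lambda>x. x) has_real_derivative D (\<lambda>x. x) x) (at x within II)" if "x \<in> II" for x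
    using d[OF that] by simp
  ultimately show ?thesis unfolding nice_def using d
    by (intro conjI ballI exI[of _ "\<lambda>_. 0"] exI[of _ 0]) auto
qed

lemma D_comp: assumes "nice k" "C1_on_I g" "g ` II \<subseteq> II" "t \<in> II"
  shows "D (\<lambda>x. k (g x)) t = D k (g t) * D g t"
    "((\<lambda>x. k (g x)) has_real_derivative D k (g t) * D g t) (at t within II)"
proof -
  have gt: "g t \<in> II" using assms(3,4) by blast
  show "((\<lambda>x. k (g x)) has_real_derivative D k (g t) * D g t) (at t within II)"
    by (rule chain_II[OF C1_deriv[OF assms(2,4)] _ assms(3)]) (use assms(1) gt in \<open>auto simp: nice_def\<close>)
  then show "D (\<lambda>x. k (g x)) t = D k (g t) * D g t" by (rule D_unique[OF assms(4)])
qed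

lemma lnD_comp: assumes "nice k" "g \<in> Diff1d \<delta>" "t \<in> II"
  shows "ln (D (\<lambda>x. k (g x)) t) = ln (D k (g t)) + ln (D g t)"
proof -
  have gt: "g t \<in> II" using Diff1d_facts(4)[OF assms(2)] assms(3) by blast
  have "D k (g t) > 0" using assms(1) gt unfolding nice_def by blast
  moreover have "D g t > 0" using Diff1d_facts(5)[OF assms(2) assms(3)] .
  ultimately show ?thesis using D_comp(1)[OF assms(1) Diff1d_facts(1)[OF assms(2)] _ assms(3)]
      Diff1d_facts(4)[OF assms(2)] by (simp add: ln_mult)
qed




lemma Hol_diff: "Hol \<delta> u K \<Longrightarrow> Hol \<delta> v L \<Longrightarrow> Hol \<delta> (\<lambda>t. u t - v t) (K + L)"
  unfolding Hol_def
proof (intro ballI)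
  fix t1 t2 assume a: "\<forall>t1\<in>II. \<forall>t2\<in>II. \<bar>u t2 - u t1\<bar> \<le> K * \<bar>t2 - t1\<bar> powr \<delta>"
    "\<forall>t1\<in>II. \<forall>t2\<in>II. \<bar>v t2 - v t1\<bar> \<le> L * \<bar>t2 - t1\<bar> powr \<delta>" and t: "t1 \<in> II" "t2 \<in> II"
  have "\<bar>u t2 - u t1\<bar> \<le> K * \<bar>t2 - t1\<bar> powr \<delta>" "\<bar>v t2 - v t1\<bar> \<le> L * \<bar>t2 - t1\<bar> powr \<delta>"
    using a t by auto
  then show "\<bar>u t2 - v t2 - (u t1 - v t1)\<bar> \<le> (K + L) * \<bar>t2 - t1\<bar> powr \<delta>"
  proof -
    have "\<bar>u t2 - v t2 - (u t1 - v t1)\<bar> \<le> \<bar>u t2 - u t1\<bar> + \<bar>v t2 - v t1\<bar>" by linarith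
    then show ?thesis using \<open>\<bar>u t2 - u t1\<bar> \<le> _\<close> \<open>\<bar>v t2 - v t1\<bar> \<le> _\<close> by (simp add: distrib_right)
  qed
qed

lemma D_diff: "C1_on_I f \<Longrightarrow> C1_on_I g \<Longrightarrow> t \<in> II \<Longrightarrow> D (\<lambda>t. g t - f t) t = D g t - D f t"
  by (rule D_unique) (auto intro!: derivative_eq_intros C1_deriv)

lemma close: assumes f: "f \<in> Diff1d \<delta>" and g: "g \<in> Diff1d \<delta>" and d: "0 < \<delta>"
  and n: "norm1d \<delta> (\<lambda>t. g t - f t) < \<eta>"
  shows "\<And>t. t \<in> II \<Longrightarrow> \<bar>D g t - D f t\<bar> < \<eta>" "Hol \<delta> (\<lambda>t. D g t - D f t) \<eta>"
proof -
  let ?w = "\<lambda>t. D g t - D f t"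
  have hq: "holder_quots \<delta> (D (\<lambda>t. g t - f t)) = holder_quots \<delta> ?w"
    by (rule hq_cong) (rule D_diff[OF Diff1d_facts(1)[OF f] Diff1d_facts(1)[OF g]])
  have bw: "bdd_above (holder_quots \<delta> ?w)"
    by (rule hq_bdd[OF Hol_diff[OF hn_Hol[OF Diff1d_facts(6)[OF g]] hn_Hol[OF Diff1d_facts(6)[OF f]]]])
  have n': "\<bar>?w 0\<bar> + hn \<delta> ?w < \<eta>"
    using n unfolding norm1d_def hq using D_diff[OF Diff1d_facts(1)[OF f] Diff1d_facts(1)[OF g], of 0] by simp
  have h0: "0 \<le> hn \<delta> ?w" by (rule hn_nonneg[OF bw])
  show "Hol \<delta> ?w \<eta>" by (rule Hol_mono[OF hn_Hol[OF bw]]) (use n' in simp)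
  fix t assume t: "t \<in> II"
  have "\<bar>?w t - ?w 0\<bar> \<le> hn \<delta> ?w" by (rule Hol_sup[OF hn_Hol[OF bw] t d])
  then show "\<bar>D g t - D f t\<bar> < \<eta>" using n' by linarith
qed

lemma P_diff: assumes "bdd_above (holder_quots \<delta> A)" "bdd_above (holder_quots \<delta> B)"
  "Hol \<delta> (\<lambda>t. A t - B t) K"
  shows "\<bar>(\<bar>A 0\<bar> + hn \<delta> A) - (\<bar>B 0\<bar> + hn \<delta> B)\<bar> \<le> \<bar>A 0 - B 0\<bar> + K"
proof -
  have "Hol \<delta> (\<lambda>t. B t + (A t - B t)) (hn \<delta> B + K)" by (rule Hol_add[OF hn_Hol[OF assms(2)] assms(3)])
  then have "Hol \<delta> A (hn \<delta> B + K)" by simp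
  then have 1: "hn \<delta> A \<le> hn \<delta> B + K" by (rule hn_le)
  have "Hol \<delta> (\<lambda>t. A t - (A t - B t)) (hn \<delta> A + K)" by (rule Hol_diff[OF hn_Hol[OF assms(1)] assms(3)])
  then have "Hol \<delta> B (hn \<delta> A + K)" by simp
  then have 2: "hn \<delta> B \<le> hn \<delta> A + K" by (rule hn_le)
  have "\<bar>\<bar>A 0\<bar> - \<bar>B 0\<bar>\<bar> \<le> \<bar>A 0 - B 0\<bar>" by (rule abs_triangle_ineq3)
  then show ?thesis using 1 2 by linarith
qed

lemma alg1: fixes m M H e d a1 a2 w1 w2 :: real
  assumes "m > 0" "m \<le> a1" "a1 \<le> M" "m \<le> a2" "a2 \<le> M" "\<bar>w1\<bar> \<le> e" "\<bar>w2\<bar> \<le> e" "e \<le> m/2"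
    "\<bar>w2 - w1\<bar> \<le> e*d" "\<bar>a2 - a1\<bar> \<le> H*d" "d \<ge> 0"
  shows "\<bar>(ln (a2+w2) - ln a2) - (ln (a1+w1) - ln a1)\<bar> \<le> e*d*(2*(M+H)/m^2)"
proof -
  define b1 b2 where "b1 = a1 + w1" "b2 = a2 + w2"
  have b: "b1 \<ge> m/2" "b2 \<ge> m/2" using assms unfolding b1_b2_def by auto
  have pos: "a1 > 0" "a2 > 0" "b1 > 0" "b2 > 0" using assms b by auto
  have eq: "(ln b2 - ln a2) - (ln b1 - ln a1) = ln (b2*a1) - ln (b1*a2)"
    using pos by (simp add: ln_mult)
  have le1: "\<bar>ln (b2*a1) - ln (b1*a2)\<bar> \<le> \<bar>b2*a1 - b1*a2\<bar> / min (b2*a1) (b1*a2)"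
    by (rule ln_diff_le) (use pos in auto)
  have "b2*a1 - b1*a2 = (w2-w1)*a1 - w1*(a2-a1)" unfolding b1_b2_def by (simp add: algebra_simps)
  then have "\<bar>b2*a1 - b1*a2\<bar> \<le> \<bar>w2-w1\<bar>*a1 + \<bar>w1\<bar>*\<bar>a2-a1\<bar>"
  proof -
    have "\<bar>(w2-w1)*a1 - w1*(a2-a1)\<bar> \<le> \<bar>(w2-w1)*a1\<bar> + \<bar>w1*(a2-a1)\<bar>" by (rule abs_triangle_ineq4)
    also have "\<dots> = \<bar>w2-w1\<bar>*a1 + \<bar>w1\<bar>*\<bar>a2-a1\<bar>" using pos by (simp add: abs_mult)
    finally show ?thesis using \<open>b2*a1 - b1*a2 = (w2-w1)*a1 - w1*(a2-a1)\<close> by simp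
  qed
  also have "\<dots> \<le> (e*d)*M + e*(H*d)"
    by (intro add_mono mult_mono) (use assms pos in auto)
  finally have num: "\<bar>b2*a1 - b1*a2\<bar> \<le> e*d*(M+H)" by (simp add: algebra_simps)
  have "(m/2)*m \<le> b2*a1" by (rule mult_mono) (use assms b in auto)
  moreover have "(m/2)*m \<le> b1*a2" by (rule mult_mono) (use assms b in auto)
  ultimately have den: "(m/2)*m \<le> min (b2*a1) (b1*a2)" by simp
  have "\<bar>b2*a1 - b1*a2\<bar> / min (b2*a1) (b1*a2) \<le> (e*d*(M+H)) / ((m/2)*m)"
    by (rule frac_le) (use num den assms in auto)
  also have "\<dots> = e*d*(2*(M+H)/m^2)" by (simp add: power2_eq_square field_simps)
  finally show ?thesis using eq le1 unfolding b1_b2_def by simp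
qed




lemma nice_facts: assumes "nice k"
  obtains u' L1 L2 where "\<And>x. x \<in> II \<Longrightarrow> k x \<in> II"
    "\<And>x. x \<in> II \<Longrightarrow> D k x > 0"
    "\<And>x. x \<in> II \<Longrightarrow> ((\<lambda>x. ln (D k x)) has_real_derivative u' x) (at x within II)"
    "\<And>x. x \<in> II \<Longrightarrow> \<bar>u' x\<bar> \<le> L1"
    "\<And>x y. x \<in> II \<Longrightarrow> y \<in> II \<Longrightarrow> \<bar>u' x - u' y\<bar> \<le> L2 * \<bar>x - y\<bar>" "L1 \<ge> 0" "L2 \<ge> 0"
proof -
  obtain u' L1 L2 where h: "\<forall>x\<in>II. ((\<lambda>x. ln (D k x)) has_real_derivative u' x) (at x within II)"
        "\<forall>x\<in>II. \<bar>u' x\<bar> \<le> L1" "\<forall>x\<in>II. \<forall>y\<in>II. \<bar>u' x - u' y\<bar> \<le> L2 * \<bar>x - y\<bar>"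
    using assms unfolding nice_def by blast
  have z: "(0::real) \<in> II" "(1::real) \<in> II" by auto
  have "\<bar>u' 0 - u' 1\<bar> \<le> L2 * \<bar>0 - 1\<bar>" using h(3) z by blast
  then have "L2 \<ge> 0" by simp
  moreover have "L1 \<ge> 0" using h(2) by (meson abs_ge_zero order_trans atLeastAtMost_iff order_refl zero_le_one)
  ultimately show ?thesis using that[of u' L1 L2] h assms unfolding nice_def by blast
qed

lemma uog_deriv: assumes "nice k" "g \<in> Diff1d \<delta>" "t \<in> II"
  "((\<lambda>x. ln (D k x)) has_real_derivative u' (g t)) (at (g t) within II)"
  shows "((\<lambda>x. ln (D k (g x))) has_real_derivative u' (g t) * D g t) (at t within II)"
  using chain_II[OF C1_deriv[OF Diff1d_facts(1)[OF assms(2)] assms(3)] assms(4)] Diff1d_facts(4)[OF assms(2)]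
  by simp

lemma comp_bdd: assumes k: "nice k" and g: "g \<in> Diff1d \<delta>" and d: "0 < \<delta>" "\<delta> \<le> 1"
  shows "bdd_above (holder_quots \<delta> (\<lambda>t. ln (D (\<lambda>x. k (g x)) t)))"
proof -
  obtain u' L1 L2 where kf: "\<And>x. x \<in> II \<Longrightarrow> k x \<in> II"
    "\<And>x. x \<in> II \<Longrightarrow> D k x > 0"
    "\<And>x. x \<in> II \<Longrightarrow> ((\<lambda>x. ln (D k x)) has_real_derivative u' x) (at x within II)"
    "\<And>x. x \<in> II \<Longrightarrow> \<bar>u' x\<bar> \<le> L1" "L1 \<ge> 0"
    using nice_facts[OF k] by metis
  obtain mg where mg: "mg > 0" "\<And>t. t \<in> II \<Longrightarrow> mg \<le> D g t"
    using cont_min[OF C1_cont[OF Diff1d_facts(1)[OF g]] Diff1d_facts(5)[OF g]] by blast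
  obtain Mg where Mg: "\<And>t. t \<in> II \<Longrightarrow> \<bar>D g t\<bar> \<le> Mg"
    using cont_max[OF C1_cont[OF Diff1d_facts(1)[OF g]]] by blast
  have gI: "\<And>t. t \<in> II \<Longrightarrow> g t \<in> II" using Diff1d_facts(4)[OF g] by blast
  have H1: "Hol \<delta> (\<lambda>t. ln (D g t)) (hn \<delta> (D g) / mg)"
    by (rule lnD_Hol[OF mg(2) mg(1) hn_Hol[OF Diff1d_facts(6)[OF g]]])
  have "\<bar>ln (D k (g t2)) - ln (D k (g t1))\<bar> \<le> (L1 * \<bar>Mg\<bar>) * \<bar>t2 - t1\<bar>"
    if "t1 \<in> II" "t2 \<in> II" for t1 t2
  proof (rule Lip_deriv[of _ "\<lambda>x. u' (g x) * D g x", OF _ _ that])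
    fix x assume x: "x \<in> II"
    show "((\<lambda>x. ln (D k (g x))) has_real_derivative u' (g x) * D g x) (at x within II)"
      by (rule uog_deriv[where u'=u', OF k g x kf(3)[OF gI[OF x]]])
  next
    fix x assume x: "x \<in> II"
    show "\<bar>u' (g x) * D g x\<bar> \<le> L1 * \<bar>Mg\<bar>"
      unfolding abs_mult by (rule mult_mono) (use kf(4)[OF gI[OF x]] Mg[OF x] kf(5) in auto)
  qed
  then have H2: "Hol \<delta> (\<lambda>t. ln (D k (g t))) (L1 * \<bar>Mg\<bar>)"
    by (rule Hol_of_Lip) (use kf(5) d in auto)
  have "Hol \<delta> (\<lambda>t. ln (D k (g t)) + ln (D g t)) (L1 * \<bar>Mg\<bar> + hn \<delta> (D g) / mg)"
    by (rule Hol_add[OF H2 H1])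
  then have "Hol \<delta> (\<lambda>t. ln (D (\<lambda>x. k (g x)) t)) (L1 * \<bar>Mg\<bar> + hn \<delta> (D g) / mg)"
    using Hol_cong[of "\<lambda>t. ln (D (\<lambda>x. k (g x)) t)" "\<lambda>t. ln (D k (g t)) + ln (D g t)"]
      lnD_comp[OF k g] by simp
  then show ?thesis by (rule hq_bdd)
qed




lemma comp_cont: assumes d: "0 < \<delta>" "\<delta> \<le> 1" and k: "nice k" and f: "f \<in> Diff1d \<delta>" and e: "\<epsilon> > 0"
  shows "\<exists>\<eta>>0. \<forall>g\<in>Diff1d \<delta>. norm1d \<delta> (\<lambda>t. g t - f t) < \<eta> \<longrightarrow>
           \<bar>p_delta \<delta> (\<lambda>x. k (g x)) - p_delta \<delta> (\<lambda>x. k (f x))\<bar> < \<epsilon>"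
proof -
  obtain u' L1 L2 where kf: "\<And>x. x \<in> II \<Longrightarrow> k x \<in> II"
    "\<And>x. x \<in> II \<Longrightarrow> D k x > 0"
    "\<And>x. x \<in> II \<Longrightarrow> ((\<lambda>x. ln (D k x)) has_real_derivative u' x) (at x within II)"
    "\<And>x. x \<in> II \<Longrightarrow> \<bar>u' x\<bar> \<le> L1"
    "\<And>x y. x \<in> II \<Longrightarrow> y \<in> II \<Longrightarrow> \<bar>u' x - u' y\<bar> \<le> L2 * \<bar>x - y\<bar>" "L1 \<ge> 0" "L2 \<ge> 0"
    using nice_facts[OF k] by blast
  obtain m where m: "m > 0" "\<And>t. t \<in> II \<Longrightarrow> m \<le> D f t"
    using cont_min[OF C1_cont[OF Diff1d_facts(1)[OF f]] Diff1d_facts(5)[OF f]] by blast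
  obtain M where M: "\<And>t. t \<in> II \<Longrightarrow> \<bar>D f t\<bar> \<le> M"
    using cont_max[OF C1_cont[OF Diff1d_facts(1)[OF f]]] by blast
  have M0: "M \<ge> 0" using M[of 0] by simp
  define Hf where "Hf = hn \<delta> (D f)"
  have HfH: "Hol \<delta> (D f) Hf" unfolding Hf_def by (rule hn_Hol[OF Diff1d_facts(6)[OF f]])
  have Hf0: "Hf \<ge> 0" unfolding Hf_def by (rule hn_nonneg[OF Diff1d_facts(6)[OF f]])
  define C where "C = 2/m + 2*(M+Hf)/m^2 + (L2*(M+m) + L1) + 1"
  have C1: "C \<ge> 1" unfolding C_def using m(1) M0 Hf0 kf(6,7) by simp
  define \<eta> where "\<eta> = min (m/2) (\<epsilon>/(2*C))"
  have \<eta>0: "\<eta> > 0" unfolding \<eta>_def using m(1) e C1 by simp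
  have \<eta>m: "\<eta> \<le> m/2" unfolding \<eta>_def by simp
  have \<eta>C: "\<eta> * C \<le> \<epsilon>/2"
  proof -
    have "\<eta> \<le> \<epsilon>/(2*C)" unfolding \<eta>_def by simp
    then have "\<eta> * C \<le> \<epsilon>/(2*C) * C" by (rule mult_right_mono) (use C1 in auto)
    also have "\<dots> = \<epsilon>/2" using C1 by simp
    finally show ?thesis .
  qed
  have fI: "\<And>t. t \<in> II \<Longrightarrow> f t \<in> II" using Diff1d_facts(4)[OF f] by blast
  show ?thesis
  proof (intro exI[of _ \<eta>] conjI ballI impI \<eta>0)
    fix g assume g: "g \<in> Diff1d \<delta>" and n: "norm1d \<delta> (\<lambda>t. g t - f t) < \<eta>"
    have gI: "\<And>t. t \<in> II \<Longrightarrow> g t \<in> II" using Diff1d_facts(4)[OF g] by blast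
    have wt: "\<And>t. t \<in> II \<Longrightarrow> \<bar>D g t - D f t\<bar> < \<eta>" by (rule close(1)[OF f g d(1) n])
    have wH: "Hol \<delta> (\<lambda>t. D g t - D f t) \<eta>" by (rule close(2)[OF f g d(1) n])
    have gf: "\<bar>g t - f t\<bar> \<le> \<eta>" if t: "t \<in> II" for t
    proof -
      have "\<bar>(g t - f t) - (g 0 - f 0)\<bar> \<le> \<eta> * \<bar>t - 0\<bar>"
      proof (rule Lip_deriv[of _ "\<lambda>t. D g t - D f t"])
        fix x assume x: "x \<in> II"
        show "((\<lambda>t. g t - f t) has_real_derivative D g x - D f x) (at x within II)"
          by (intro derivative_intros C1_deriv[OF Diff1d_facts(1)[OF g] x] C1_deriv[OF Diff1d_facts(1)[OF f] x])
        show "\<bar>D g x - D f x\<bar> \<le> \<eta>" using wt[OF x] by simp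
      qed (use t in auto)
      moreover have "\<eta> * \<bar>t - 0\<bar> \<le> \<eta> * 1" by (rule mult_left_mono) (use t \<eta>0 in auto)
      ultimately show ?thesis using Diff1d_facts(2)[OF f] Diff1d_facts(2)[OF g] by simp
    qed
    have Dgpos: "D g t \<ge> m/2" if t: "t \<in> II" for t using wt[OF t] m(2)[OF t] \<eta>m by linarith
    define K1 where "K1 = \<eta>*(2*(M+Hf)/m^2)"
    define K2 where "K2 = \<eta>*(L2*(M+m)+L1)"
    have HolF: "Hol \<delta> (\<lambda>t. ln (D g t) - ln (D f t)) K1"
      unfolding Hol_def K1_def
    proof (intro ballI)
      fix t1 t2 :: real assume t: "t1 \<in> II" "t2 \<in> II"
      have "\<bar>(ln (D f t2 + (D g t2 - D f t2)) - ln (D f t2)) - (ln (D f t1 + (D g t1 - D f t1)) - ln (D f t1))\<bar>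
            \<le> \<eta> * \<bar>t2 - t1\<bar> powr \<delta> * (2*(M+Hf)/m^2)"
      proof (rule alg1)
        show "\<bar>(D g t2 - D f t2) - (D g t1 - D f t1)\<bar> \<le> \<eta> * \<bar>t2 - t1\<bar> powr \<delta>"
          using wH t unfolding Hol_def by blast
        show "\<bar>D f t2 - D f t1\<bar> \<le> Hf * \<bar>t2 - t1\<bar> powr \<delta>"
          using HfH t unfolding Hol_def by blast
        show "m > 0" by (rule m(1))
        show "m \<le> D f t1" "m \<le> D f t2" using m(2) t by auto
        show "D f t1 \<le> M" "D f t2 \<le> M" using M t by (auto simp: abs_le_iff)
        show "\<bar>D g t1 - D f t1\<bar> \<le> \<eta>" "\<bar>D g t2 - D f t2\<bar> \<le> \<eta>" using wt t less_imp_le by auto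
        show "\<eta> \<le> m/2" by (rule \<eta>m)
        show "0 \<le> \<bar>t2 - t1\<bar> powr \<delta>" by simp
      qed
      then show "\<bar>ln (D g t2) - ln (D f t2) - (ln (D g t1) - ln (D f t1))\<bar> \<le> \<eta> * (2 * (M + Hf) / m\<^sup>2) * \<bar>t2 - t1\<bar> powr \<delta>"
        by (simp add: mult_ac)
    qed
    have HolP: "Hol \<delta> (\<lambda>t. ln (D k (g t)) - ln (D k (f t))) K2"
    proof (rule Hol_of_Lip)
      fix t1 t2 :: real assume t: "t1 \<in> II" "t2 \<in> II"
      show "\<bar>ln (D k (g t2)) - ln (D k (f t2)) - (ln (D k (g t1)) - ln (D k (f t1)))\<bar> \<le> K2 * \<bar>t2 - t1\<bar>"
      proof (rule Lip_deriv[of _ "\<lambda>x. u' (g x) * D g x - u' (f x) * D f x", OF _ _ t])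
        fix x assume x: "x \<in> II"
        show "((\<lambda>t. ln (D k (g t)) - ln (D k (f t))) has_real_derivative u' (g x) * D g x - u' (f x) * D f x) (at x within II)"
          by (intro derivative_intros uog_deriv[where u'=u', OF k g x kf(3)[OF gI[OF x]]]
                uog_deriv[where u'=u', OF k f x kf(3)[OF fI[OF x]]])
        have a: "\<bar>u' (g x) - u' (f x)\<bar> \<le> L2 * \<eta>"
        proof -
          have "L2 * \<bar>g x - f x\<bar> \<le> L2 * \<eta>" by (rule mult_left_mono[OF gf[OF x] kf(7)])
          then show ?thesis using kf(5)[OF gI[OF x] fI[OF x]] by linarith
        qed
        have b: "\<bar>D g x\<bar> \<le> M + m" using wt[OF x] M[OF x] \<eta>m m(1) by linarith
        have c1: "\<bar>(u' (g x) - u' (f x)) * D g x\<bar> \<le> (L2 * \<eta>) * (M + m)"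
          unfolding abs_mult by (rule mult_mono) (use a b in auto)
        have c2: "\<bar>u' (f x) * (D g x - D f x)\<bar> \<le> L1 * \<eta>"
          unfolding abs_mult by (rule mult_mono) (use kf(4)[OF fI[OF x]] wt[OF x] kf(6) in auto)
        have c3: "u' (g x) * D g x - u' (f x) * D f x = (u' (g x) - u' (f x)) * D g x + u' (f x) * (D g x - D f x)"
          by (simp add: algebra_simps)
        have "\<bar>u' (g x) * D g x - u' (f x) * D f x\<bar> \<le> \<bar>(u' (g x) - u' (f x)) * D g x\<bar> + \<bar>u' (f x) * (D g x - D f x)\<bar>"
          unfolding c3 by (rule abs_triangle_ineq)
        also have "\<dots> \<le> (L2 * \<eta>) * (M + m) + L1 * \<eta>" using c1 c2 by (rule add_mono)
        also have "\<dots> = K2" unfolding K2_def by (simp add: algebra_simps)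
        finally show "\<bar>u' (g x) * D g x - u' (f x) * D f x\<bar> \<le> K2" .
      qed
    next
      show "0 \<le> K2" unfolding K2_def using \<eta>0 M0 m(1) kf(6,7) by simp
    qed (use d in auto)
    let ?A = "\<lambda>t. ln (D (\<lambda>x. k (g x)) t)" and ?B = "\<lambda>t. ln (D (\<lambda>x. k (f x)) t)"
    have HolAB: "Hol \<delta> (\<lambda>t. ?A t - ?B t) (K2 + K1)"
    proof -
      have "Hol \<delta> (\<lambda>t. (ln (D k (g t)) - ln (D k (f t))) + (ln (D g t) - ln (D f t))) (K2 + K1)"
        by (rule Hol_add[OF HolP HolF])
      moreover have "\<And>t. t \<in> II \<Longrightarrow> ?A t - ?B t = (ln (D k (g t)) - ln (D k (f t))) + (ln (D g t) - ln (D f t))"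
        using lnD_comp[OF k g] lnD_comp[OF k f] by simp
      moreover have "Hol \<delta> (\<lambda>t. ?A t - ?B t) (K2 + K1) = Hol \<delta> (\<lambda>t. (ln (D k (g t)) - ln (D k (f t))) + (ln (D g t) - ln (D f t))) (K2 + K1)"
        by (rule Hol_cong) (rule calculation(2))
      ultimately show ?thesis by simp
    qed
    have z: "(0::real) \<in> II" by simp
    have AB0: "\<bar>?A 0 - ?B 0\<bar> \<le> 2*\<eta>/m"
    proof -
      have "?A 0 - ?B 0 = ln (D g 0) - ln (D f 0)"
        using lnD_comp[OF k g z] lnD_comp[OF k f z] Diff1d_facts(2)[OF f] Diff1d_facts(2)[OF g] by simp
      moreover have "\<bar>ln (D g 0) - ln (D f 0)\<bar> \<le> \<bar>D g 0 - D f 0\<bar> / min (D g 0) (D f 0)"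
        by (rule ln_diff_le) (use Dgpos[OF z] Diff1d_facts(5)[OF f z] m(1) in auto)
      moreover have "\<bar>D g 0 - D f 0\<bar> / min (D g 0) (D f 0) \<le> \<eta> / (m/2)"
      proof (rule frac_le)
        have "m \<le> D f 0" using m(2) z by blast
        then show "m/2 \<le> min (D g 0) (D f 0)" using Dgpos[OF z] m(1) by auto
      qed (use wt[OF z] m(1) \<eta>0 in auto)
      moreover have "\<eta> / (m/2) = 2*\<eta>/m" by simp
      ultimately show ?thesis by (metis (no_types) order_trans)
    qed
    have "\<bar>(\<bar>?A 0\<bar> + hn \<delta> ?A) - (\<bar>?B 0\<bar> + hn \<delta> ?B)\<bar> \<le> \<bar>?A 0 - ?B 0\<bar> + (K2 + K1)"
      by (rule P_diff[OF comp_bdd[OF k g d] comp_bdd[OF k f d] HolAB])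
    also have "\<dots> \<le> 2*\<eta>/m + K2 + K1" using AB0 by simp
    also have "\<dots> = \<eta> * C - \<eta>" unfolding K1_def K2_def C_def by (simp add: algebra_simps)
    also have "\<dots> < \<epsilon>" using \<eta>C \<eta>0 e by linarith
    finally show "\<bar>p_delta \<delta> (\<lambda>x. k (g x)) - p_delta \<delta> (\<lambda>x. k (f x))\<bar> < \<epsilon>"
      unfolding p_delta_def .
  qed
qed




lemma p_cong: assumes "\<And>t. t \<in> II \<Longrightarrow> a t = b t" shows "p_delta \<delta> a = p_delta \<delta> b"
proof -
  have "\<And>t. t \<in> II \<Longrightarrow> D a t = D b t" by (rule D_cong[OF assms])
  then have "holder_quots \<delta> (\<lambda>t. ln (D a t)) = holder_quots \<delta> (\<lambda>t. ln (D b t))"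
    by (intro hq_cong) simp
  moreover have "D a 0 = D b 0" using \<open>\<And>t. t \<in> II \<Longrightarrow> D a t = D b t\<close> by simp
  ultimately show ?thesis unfolding p_delta_def by simp
qed

lemma nice_Diff03: assumes k: "k \<in> Diff03" shows "nice k"
proof -
  have bij: "bij_betw k II II" and c3: "C3_on_I k" and c3i: "C3_on_I (inv_into II k)"
    and k01: "k 0 = 0" "k 1 = 1" using k unfolding Diff03_def by auto
  have c1: "C1_on_I k" "C1_on_I (D k)" "C1_on_I (D (D k))" using c3 unfolding C3_on_I_def by auto
  have "k \<in> Diff1" unfolding Diff1_def using bij c1(1) c3i k01 unfolding C3_on_I_def by auto
  then have pos: "\<And>x. x \<in> II \<Longrightarrow> D k x > 0" by (rule Diff1_pos)
  define u' where "u' = (\<lambda>x. D (D k) x / D k x)"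
  define u'' where "u'' = (\<lambda>x. (D (D (D k)) x * D k x - D (D k) x * D (D k) x) / (D k x * D k x))"
  have du: "((\<lambda>x. ln (D k x)) has_real_derivative u' x) (at x within II)" if x: "x \<in> II" for x
  proof (rule DERIV_cong)
    show "((\<lambda>x. ln (D k x)) has_real_derivative inverse (D k x) * D (D k) x) (at x within II)"
      by (rule DERIV_chain2[OF DERIV_ln[OF pos[OF x]] C1_deriv[OF c1(2) x]])
    show "inverse (D k x) * D (D k) x = u' x" unfolding u'_def by (simp add: field_simps)
  qed
  have du': "(u' has_real_derivative u'' x) (at x within II)" if x: "x \<in> II" for x
    unfolding u'_def u''_def
    by (rule DERIV_divide[OF C1_deriv[OF c1(3) x] C1_deriv[OF c1(2) x]]) (use pos[OF x] in simp)
  have cont0: "continuous_on II (D k)" "continuous_on II (D (D k))" "continuous_on II (D (D (D k)))"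
    using C1_cont c1 by auto
  have cu': "continuous_on II u'" unfolding u'_def
    by (intro continuous_intros cont0) (use pos in fastforce)
  have cu'': "continuous_on II u''" unfolding u''_def
    by (intro continuous_intros cont0) (use pos in fastforce)
  obtain L1 where L1: "\<And>x. x \<in> II \<Longrightarrow> \<bar>u' x\<bar> \<le> L1" using cont_max[OF cu'] by blast
  obtain L2 where L2: "\<And>x. x \<in> II \<Longrightarrow> \<bar>u'' x\<bar> \<le> L2" using cont_max[OF cu''] by blast
  have lip: "\<bar>u' x - u' y\<bar> \<le> L2 * \<bar>x - y\<bar>" if "x \<in> II" "y \<in> II" for x y
    by (rule Lip_deriv[OF du' L2 that(2,1)])
  have kI: "\<forall>x\<in>II. k x \<in> II" using bij by (auto simp: bij_betw_def)
  have kd: "\<forall>x\<in>II. (k has_real_derivative D k x) (at x within II)" using C1_deriv[OF c1(1)] by blast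
  have ex: "\<exists>u' L1 L2. (\<forall>x\<in>II. ((\<lambda>x. ln (D k x)) has_real_derivative u' x) (at x within II))
        \<and> (\<forall>x\<in>II. \<bar>u' x\<bar> \<le> L1) \<and> (\<forall>x\<in>II. \<forall>y\<in>II. \<bar>u' x - u' y\<bar> \<le> L2 * \<bar>x - y\<bar>)"
    apply (rule exI[of _ u'], rule exI[of _ L1], rule exI[of _ L2])
    using du L1 lip by blast
  show ?thesis unfolding nice_def using kI kd pos ex by blast
qed

lemma pcont: assumes "0 < \<delta>" "\<delta> \<le> 1" shows "cont_1d \<delta> (p_delta \<delta>)"
  unfolding cont_1d_def
proof (intro ballI allI impI)
  fix f \<epsilon> :: "_" assume f: "f \<in> Diff1d \<delta>" and e: "(\<epsilon>::real) > 0"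
  from comp_cont[OF assms nice_id f e] show "\<exists>\<eta>>0. \<forall>g\<in>Diff1d \<delta>. norm1d \<delta> (\<lambda>t. g t - f t) < \<eta> \<longrightarrow>
           \<bar>p_delta \<delta> g - p_delta \<delta> f\<bar> < \<epsilon>" by simp
qed




lemma floor2: "real_of_int \<lfloor>x\<rfloor> \<le> x \<and> x < real_of_int \<lfloor>x\<rfloor> + 1"
  using floor_correct[of x] by simp

lemma floor_close: assumes "\<lfloor>a / e\<rfloor> = \<lfloor>b / e\<rfloor>" "(e::real) > 0" shows "\<bar>a - b\<bar> < e"
proof -
  have f1: "real_of_int \<lfloor>a/e\<rfloor> \<le> a/e" "a/e < real_of_int \<lfloor>a/e\<rfloor> + 1" using floor2 by blast+
  have f2: "real_of_int \<lfloor>b/e\<rfloor> \<le> b/e" "b/e < real_of_int \<lfloor>b/e\<rfloor> + 1" using floor2 by blast+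
  have gen: "\<And>z A B::real. z \<le> A \<Longrightarrow> A < z+1 \<Longrightarrow> z \<le> B \<Longrightarrow> B < z+1 \<Longrightarrow> \<bar>A - B\<bar> < 1"
    by linarith
  have "\<bar>a / e - b / e\<bar> < 1" by (rule gen[OF f1[unfolded assms(1)] f2])
  moreover have "(a - b) / e = a / e - b / e" by (rule diff_divide_distrib)
  ultimately have "\<bar>(a - b) / e\<bar> < 1" by simp
  moreover have "\<bar>a - b\<bar> / e = \<bar>(a - b) / e\<bar>" by (rule abs_div_pos[OF assms(2)])
  ultimately have "\<bar>a - b\<bar> / e < 1" by (simp only:)
  then show ?thesis by (subst (asm) pos_divide_less_eq[OF assms(2)]) simp
qed
lemma exists_N: assumes "(c::real) > 0" "K \<ge> 0" "\<delta> > 0"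
  shows "\<exists>N::nat. N \<ge> 1 \<and> 2 * K * (1 / real N) powr \<delta> \<le> c / 4"
proof -
  define q where "q = c / (8*K+1)"
  have q0: "q > 0" unfolding q_def using assms by simp
  obtain n :: nat where n: "1 / (q powr (1/\<delta>)) < real n" using reals_Archimedean2 by blast
  have qp: "q powr (1/\<delta>) > 0" using q0 by simp
  then have "1 / (q powr (1/\<delta>)) > 0" by simp
  then have n0: "real n > 0" using n by linarith
  have hn: "1 / real n \<le> q powr (1/\<delta>)" using n qp n0 by (simp add: field_simps)
  have "(1 / real n) powr \<delta> \<le> (q powr (1/\<delta>)) powr \<delta>"
    by (rule powr_mono2) (use assms n0 hn in auto)
  also have "\<dots> = q" using assms q0 by (simp add: powr_powr)
  finally have "(1 / real n) powr \<delta> \<le> q" .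
  then have "2 * K * (1 / real n) powr \<delta> \<le> 2 * K * q" using assms by (simp add: mult_left_mono)
  also have "2 * K * q \<le> c / 4" unfolding q_def using assms by (simp add: field_simps)
  finally show ?thesis using n0 by (intro exI[of _ n]) auto
qed

lemma finite_reps: assumes ca: "cond_a G" and d: "0 < \<delta>" and K: "K \<ge> 0"
  shows "\<exists>F. finite F \<and> F \<subseteq> G \<and> (\<forall>k\<in>G. (\<bar>ln (D k 0)\<bar> \<le> K \<and> Hol \<delta> (\<lambda>x. ln (D k x)) K)
           \<longrightarrow> (\<exists>k'\<in>F. \<forall>t\<in>II. k t = k' t))"
proof -
  obtain c where c: "c > 0" "\<forall>g1\<in>G. \<forall>g2\<in>G. (\<exists>t\<in>II. g1 t \<noteq> g2 t) \<longrightarrow>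
      Sup ((\<lambda>t. \<bar>ln (D g1 t) - ln (D g2 t)\<bar>) ` II) \<ge> c" using ca unfolding cond_a_def by blast
  obtain N :: nat where N: "N \<ge> 1" "2 * K * (1 / real N) powr \<delta> \<le> c / 4" using exists_N[OF c(1) K d] by blast
  define e where "e = c / 4"
  have e0: "e > 0" unfolding e_def using c by simp
  define T where "T = {k\<in>G. \<bar>ln (D k 0)\<bar> \<le> K \<and> Hol \<delta> (\<lambda>x. ln (D k x)) K}"
  define R where "R = (\<lambda>k. map (\<lambda>j. \<lfloor>ln (D k (real j / real N)) / e\<rfloor>) [0..<N+1])"
  define Z where "Z = \<lceil>2*K/e\<rceil> + 1"
  have Npos: "real N > 0" using N by simp
  have grid: "real j / real N \<in> II" if "j < N + 1" for j
  proof -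
    have "real j \<le> 1 * real N" using that by simp
    then have "real j / real N \<le> 1" by (subst pos_divide_le_eq[OF Npos])
    then show ?thesis by simp
  qed
  have Rrange: "R ` T \<subseteq> {xs. set xs \<subseteq> {-Z..Z} \<and> length xs = N+1}"
  proof
    fix xs assume "xs \<in> R ` T"
    then obtain k where k: "k \<in> T" "xs = R k" by blast
    have "\<lfloor>ln (D k (real j / real N)) / e\<rfloor> \<in> {-Z..Z}" if j: "j < N + 1" for j
    proof -
      let ?v = "ln (D k (real j / real N))"
      have "\<bar>?v - ln (D k 0)\<bar> \<le> K" using Hol_sup[of \<delta> "\<lambda>x. ln (D k x)" K, OF _ grid[OF j] d] k(1)
        unfolding T_def by simp
      moreover have "\<bar>?v\<bar> \<le> \<bar>?v - ln (D k 0)\<bar> + \<bar>ln (D k 0)\<bar>"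
        using abs_triangle_ineq[of "?v - ln (D k 0)" "ln (D k 0)"] by simp
      moreover have "\<bar>ln (D k 0)\<bar> \<le> K" using k(1) unfolding T_def by simp
      ultimately have "\<bar>?v\<bar> \<le> 2*K" by linarith
      then have "\<bar>?v\<bar> / e \<le> 2*K/e" using e0 by (intro divide_right_mono) auto
      moreover have "\<bar>?v\<bar> / e = \<bar>?v / e\<bar>" by (rule abs_div_pos[OF e0])
      ultimately have "\<bar>?v / e\<bar> \<le> 2*K/e" by (simp only:)
      then have "-(2*K/e) \<le> ?v / e" "?v / e \<le> 2*K/e" unfolding abs_le_iff by linarith+
      moreover have "real_of_int \<lceil>2*K/e\<rceil> \<ge> 2*K/e" by simp
      moreover have "real_of_int \<lfloor>?v / e\<rfloor> \<le> ?v / e" "?v / e < real_of_int \<lfloor>?v / e\<rfloor> + 1" by linarith+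
      ultimately have "real_of_int \<lfloor>?v / e\<rfloor> \<le> real_of_int \<lceil>2*K/e\<rceil>"
          "- real_of_int \<lceil>2*K/e\<rceil> - 1 < real_of_int \<lfloor>?v / e\<rfloor> + 1" by linarith+
      then have "\<lfloor>?v / e\<rfloor> \<le> \<lceil>2*K/e\<rceil>" "- \<lceil>2*K/e\<rceil> - 1 \<le> \<lfloor>?v / e\<rfloor>" by linarith+
      then show ?thesis unfolding Z_def by simp
    qed
    then show "xs \<in> {xs. set xs \<subseteq> {-Z..Z} \<and> length xs = N+1}" using k(2) unfolding R_def by (auto simp del: upt_Suc)
  qed
  have finR: "finite (R ` T)"
    by (rule finite_subset[OF Rrange]) (rule finite_lists_length_eq, simp)
  have key: "\<forall>t\<in>II. k1 t = k2 t" if k: "k1 \<in> T" "k2 \<in> T" "R k1 = R k2" for k1 k2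
  proof (rule ccontr)
    assume "\<not> (\<forall>t\<in>II. k1 t = k2 t)"
    then have "Sup ((\<lambda>t. \<bar>ln (D k1 t) - ln (D k2 t)\<bar>) ` II) \<ge> c" using c(2) k unfolding T_def by blast
    moreover have "Sup ((\<lambda>t. \<bar>ln (D k1 t) - ln (D k2 t)\<bar>) ` II) \<le> 3*e"
    proof (rule cSup_least)
      show "(\<lambda>t. \<bar>ln (D k1 t) - ln (D k2 t)\<bar>) ` II \<noteq> {}" by simp
      fix y assume "y \<in> (\<lambda>t. \<bar>ln (D k1 t) - ln (D k2 t)\<bar>) ` II"
      then obtain t where t: "t \<in> II" "y = \<bar>ln (D k1 t) - ln (D k2 t)\<bar>" by blast
      define j where "j = nat \<lfloor>t * real N\<rfloor>"
      have tN: "0 \<le> t * real N" using t by simp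
      have jle: "real j \<le> t * real N" unfolding j_def using tN by simp
      have jgt: "t * real N < real j + 1" unfolding j_def using tN by linarith
      have "t * real N \<le> 1 * real N" by (rule mult_right_mono) (use t in auto)
      then have "real j \<le> real N" using jle by linarith
      then have jN: "j < N + 1" by simp
      let ?tj = "real j / real N"
      have tj: "?tj \<in> II" by (rule grid[OF jN])
      have dist: "\<bar>t - ?tj\<bar> \<le> 1 / real N"
      proof -
        have "?tj \<le> t" using jle by (subst pos_divide_le_eq[OF Npos])
        moreover have "t < (real j + 1) / real N" using jgt by (subst pos_less_divide_eq[OF Npos])
        moreover have "(real j + 1) / real N = ?tj + 1 / real N" by (rule add_divide_distrib)
        ultimately have "?tj \<le> t" "t - ?tj < 1 / real N" by linarith+
        then show ?thesis by simp
      qed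
      have pw: "\<bar>t - ?tj\<bar> powr \<delta> \<le> (1 / real N) powr \<delta>" by (rule powr_mono2) (use d dist in auto)
      have h1: "\<bar>ln (D k1 t) - ln (D k1 ?tj)\<bar> \<le> K * (1 / real N) powr \<delta>"
      proof -
        have "\<bar>ln (D k1 t) - ln (D k1 ?tj)\<bar> \<le> K * \<bar>t - ?tj\<bar> powr \<delta>"
          using k(1) t tj unfolding T_def Hol_def by blast
        also have "\<dots> \<le> K * (1 / real N) powr \<delta>" by (rule mult_left_mono[OF pw K])
        finally show ?thesis .
      qed
      have h2: "\<bar>ln (D k2 ?tj) - ln (D k2 t)\<bar> \<le> K * (1 / real N) powr \<delta>"
      proof -
        have "\<bar>ln (D k2 ?tj) - ln (D k2 t)\<bar> \<le> K * \<bar>?tj - t\<bar> powr \<delta>"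
          using k(2) t tj unfolding T_def Hol_def by blast
        also have "\<dots> \<le> K * (1 / real N) powr \<delta>" using mult_left_mono[OF pw K] by (simp add: abs_minus_commute)
        finally show ?thesis .
      qed
      have "R k1 ! j = R k2 ! j" using k(3) by simp
      then have "\<lfloor>ln (D k1 ?tj) / e\<rfloor> = \<lfloor>ln (D k2 ?tj) / e\<rfloor>" unfolding R_def using jN
        by (simp del: upt_Suc)
      then have h3: "\<bar>ln (D k1 ?tj) - ln (D k2 ?tj)\<bar> < e" by (rule floor_close[OF _ e0])
      have "y \<le> \<bar>ln (D k1 t) - ln (D k1 ?tj)\<bar> + \<bar>ln (D k1 ?tj) - ln (D k2 ?tj)\<bar> + \<bar>ln (D k2 ?tj) - ln (D k2 t)\<bar>"
        unfolding t(2) by linarith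
      also have "\<dots> \<le> 2 * K * (1 / real N) powr \<delta> + e" using h1 h2 h3 by linarith
      also have "\<dots> \<le> 3 * e" using N(2) c(1) unfolding e_def by linarith
      finally show "y \<le> 3 * e" .
    qed
    ultimately show False using c(1) unfolding e_def by linarith
  qed
  define F where "F = (\<lambda>q. SOME k. k \<in> T \<and> R k = q) ` (R ` T)"
  have Fs: "(SOME k. k \<in> T \<and> R k = R k0) \<in> T \<and> R (SOME k. k \<in> T \<and> R k = R k0) = R k0" if "k0 \<in> T" for k0
    by (rule someI[of _ k0]) (use that in simp)
  show ?thesis
  proof (intro exI[of _ F] conjI ballI impI)
    show "finite F" unfolding F_def using finR by simp
    show "F \<subseteq> G" unfolding F_def T_def using Fs unfolding T_def by auto
    fix k assume "k \<in> G" "\<bar>ln (D k 0)\<bar> \<le> K \<and> Hol \<delta> (\<lambda>x. ln (D k x)) K"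
    then have kT: "k \<in> T" unfolding T_def by simp
    let ?k' = "SOME k'. k' \<in> T \<and> R k' = R k"
    have "?k' \<in> F" unfolding F_def using kT by blast
    moreover have "\<forall>t\<in>II. k t = ?k' t" using key[OF kT] Fs[OF kT] by simp
    ultimately show "\<exists>k'\<in>F. \<forall>t\<in>II. k t = k' t" by blast
  qed
qed




lemma r_reindex: assumes sg: "subgroup_Diff03 G" and fI: "\<And>t. t \<in> II \<Longrightarrow> f t \<in> II"
  shows "r_delta \<delta> G f = Inf ((\<lambda>k. p_delta \<delta> (\<lambda>x. k (f x))) ` G)"
proof -
  have GD: "G \<subseteq> Diff03" and inv: "\<forall>g\<in>G. \<exists>k\<in>G. \<forall>t\<in>II. k t = inv_into II g t"
    using sg unfolding subgroup_Diff03_def by auto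
  have "(\<lambda>h. p_delta \<delta> (inv_into II h \<circ> f)) ` G = (\<lambda>k. p_delta \<delta> (\<lambda>x. k (f x))) ` G"
  proof (rule set_eqI, rule iffI)
    fix y assume "y \<in> (\<lambda>h. p_delta \<delta> (inv_into II h \<circ> f)) ` G"
    then obtain h where h: "h \<in> G" "y = p_delta \<delta> (inv_into II h \<circ> f)" by blast
    obtain k where k: "k \<in> G" "\<forall>t\<in>II. k t = inv_into II h t" using inv h(1) by blast
    have "p_delta \<delta> (inv_into II h \<circ> f) = p_delta \<delta> (\<lambda>x. k (f x))"
      by (rule p_cong) (use k(2) fI in simp)
    then show "y \<in> (\<lambda>k. p_delta \<delta> (\<lambda>x. k (f x))) ` G" using h(2) k(1) by blast
  next
    fix y assume "y \<in> (\<lambda>k. p_delta \<delta> (\<lambda>x. k (f x))) ` G"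
    then obtain k where k: "k \<in> G" "y = p_delta \<delta> (\<lambda>x. k (f x))" by blast
    have bij: "bij_betw k II II" using GD k(1) unfolding Diff03_def by auto
    obtain h where h: "h \<in> G" "\<forall>t\<in>II. h t = inv_into II k t" using inv k(1) by blast
    have injk: "inj_on k II" using bij by (simp add: bij_betw_def)
    have "inj_on (inv_into II k) II" using bij_betw_inv_into[OF bij] by (simp add: bij_betw_def)
    then have injh: "inj_on h II" using inj_on_cong[of II h "inv_into II k"] h(2) by simp
    have hk: "inv_into II h y = k y" if y: "y \<in> II" for y
    proof (rule inv_into_f_eq[OF injh])
      show ky: "k y \<in> II" using bij y by (meson bij_betwE)
      show "h (k y) = y" using h(2) ky inv_into_f_f[OF injk y] by simp
    qed
    have "p_delta \<delta> (inv_into II h \<circ> f) = p_delta \<delta> (\<lambda>x. k (f x))"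
      by (rule p_cong) (use hk fI in simp)
    then show "y \<in> (\<lambda>h. p_delta \<delta> (inv_into II h \<circ> f)) ` G" using h(1) k(2) by force
  qed
  then show ?thesis unfolding r_delta_def by simp
qed

lemma finite_min_eta: fixes N :: "'b \<Rightarrow> real" assumes "finite F" "\<forall>k\<in>F. \<exists>\<eta>>0. \<forall>g\<in>S. N g < \<eta> \<longrightarrow> Q k g"
  shows "\<exists>\<eta>>0. \<forall>k\<in>F. \<forall>g\<in>S. N g < \<eta> \<longrightarrow> Q k g"
  using assms
proof (induction F rule: finite_induct)
  case empty
  have "(1::real) > 0" by simp
  then show ?case by blast
next
  case (insert x F)
  obtain \<eta>1 where e1: "\<eta>1 > 0" "\<forall>k\<in>F. \<forall>g\<in>S. N g < \<eta>1 \<longrightarrow> Q k g" using insert by blast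
  obtain \<eta>2 where e2: "\<eta>2 > 0" "\<forall>g\<in>S. N g < \<eta>2 \<longrightarrow> Q x g" using insert(4) by blast
  show ?case by (rule exI[of _ "min \<eta>1 \<eta>2"]) (use e1 e2 in auto)
qed

lemma mvt_lower: assumes "\<And>x. x \<in> II \<Longrightarrow> (\<phi> has_real_derivative \<phi>' x) (at x within II)"
  "\<And>x. x \<in> II \<Longrightarrow> \<mu> \<le> \<phi>' x" "0 \<le> \<mu>" "s1 \<in> II" "s2 \<in> II"
  shows "\<mu> * \<bar>s2 - s1\<bar> \<le> \<bar>\<phi> s2 - \<phi> s1\<bar>"
proof -
  have *: "\<mu> * \<bar>b - a\<bar> \<le> \<bar>\<phi> b - \<phi> a\<bar>" if ab: "a \<in> II" "b \<in> II" "a \<le> b" for a b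
  proof -
    obtain \<xi> where \<xi>: "\<xi> \<in> {a..b}" "\<phi> b - \<phi> a = \<phi>' \<xi> * (b - a)"
      using mvt_II[OF ab assms(1)] by blast
    have "\<xi> \<in> II" using \<xi>(1) ab by auto
    then have "\<mu> \<le> \<phi>' \<xi>" by (rule assms(2))
    then have "\<mu> * (b - a) \<le> \<phi>' \<xi> * (b - a)" using ab by (simp add: mult_right_mono)
    moreover have "0 \<le> \<mu> * (b - a)" using ab assms(3) by simp
    ultimately show ?thesis using \<xi>(2) ab by simp
  qed
  show ?thesis
  proof (cases "s1 \<le> s2")
    case True then show ?thesis using *[OF assms(4,5)] by simp
  next
    case False then show ?thesis using *[OF assms(5,4)] by (simp add: abs_minus_commute)
  qed
qed


theorem rcont: assumes d: "0 < \<delta>" "\<delta> \<le> 1" and sg: "subgroup_Diff03 G" and ca: "cond_a G"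
  shows "cont_1d \<delta> (r_delta \<delta> G)"
  unfolding cont_1d_def
proof (intro ballI allI impI)
  fix f and \<epsilon> :: real assume f: "f \<in> Diff1d \<delta>" and e: "\<epsilon> > 0"
  have GD: "G \<subseteq> Diff03" using sg by (simp add: subgroup_Diff03_def)
  have Gne: "G \<noteq> {}" using sg unfolding subgroup_Diff03_def by blast
  have niceG: "\<And>k. k \<in> G \<Longrightarrow> nice k" using GD nice_Diff03 by blast
  define P where "P = (\<lambda>(g::real\<Rightarrow>real) (k::real\<Rightarrow>real). p_delta \<delta> (\<lambda>x. k (g x)))"
  have Pnn: "0 \<le> P g k" if "g \<in> Diff1d \<delta>" "k \<in> G" for g k
    unfolding P_def p_delta_def using hn_nonneg[OF comp_bdd[OF niceG[OF that(2)] that(1) d]] by simp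
  have rr: "r_delta \<delta> G g = Inf (P g ` G)" if "g \<in> Diff1d \<delta>" for g
    unfolding P_def by (rule r_reindex[OF sg]) (use Diff1d_facts(4)[OF that] in blast)
  have bdd: "bdd_below (P g ` G)" if "g \<in> Diff1d \<delta>" for g
    unfolding bdd_below_def using Pnn[OF that] by blast
  define Rf where "Rf = Inf (P f ` G)"
  have Rf_le: "Rf \<le> P f k" if "k \<in> G" for k
    unfolding Rf_def by (rule cInf_lower[OF _ bdd[OF f]]) (use that in blast)
  have Rf0: "0 \<le> Rf" unfolding Rf_def
    by (rule cInf_greatest) (use Gne Pnn[OF f] in auto)
  have "Inf (P f ` G) < Rf + \<epsilon>/2" unfolding Rf_def using e by simp
  then obtain k0 where k0: "k0 \<in> G" "P f k0 < Rf + \<epsilon>/2"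
    using cInf_lessD[of "P f ` G"] Gne by blast
  obtain \<eta>1 where \<eta>1: "\<eta>1 > 0" "\<forall>g\<in>Diff1d \<delta>. norm1d \<delta> (\<lambda>t. g t - f t) < \<eta>1 \<longrightarrow> \<bar>P g k0 - P f k0\<bar> < \<epsilon>/2"
    using comp_cont[OF d niceG[OF k0(1)] f, of "\<epsilon>/2"] e unfolding P_def by auto
  obtain \<eta>2 where \<eta>2: "\<eta>2 > 0" "\<forall>g\<in>Diff1d \<delta>. norm1d \<delta> (\<lambda>t. g t - f t) < \<eta>2 \<longrightarrow> \<bar>p_delta \<delta> g - p_delta \<delta> f\<bar> < 1"
    using pcont[OF d] f unfolding cont_1d_def by (meson zero_less_one)
  obtain m where m: "m > 0" "\<And>t. t \<in> II \<Longrightarrow> m \<le> D f t"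
    using cont_min[OF C1_cont[OF Diff1d_facts(1)[OF f]] Diff1d_facts(5)[OF f]] by blast
  have bddf: "bdd_above (holder_quots \<delta> (\<lambda>t. ln (D f t)))"
    using comp_bdd[OF nice_id f d] by simp
  define pf where "pf = p_delta \<delta> f"
  have pf0: "0 \<le> pf" unfolding pf_def p_delta_def using hn_nonneg[OF bddf] by simp
  define \<mu> where "\<mu> = min 1 ((m/2) powr \<delta>)"
  have \<mu>0: "\<mu> > 0" "\<mu> \<le> 1" "\<mu> \<le> (m/2) powr \<delta>" unfolding \<mu>_def using m(1) by auto
  define K where "K = (Rf + pf + 2) / \<mu>"
  have K0: "K \<ge> 0" unfolding K_def using Rf0 pf0 \<mu>0 by simp
  have K\<mu>: "K * \<mu> = Rf + pf + 2" unfolding K_def using \<mu>0 by simp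
  have KK: "K \<ge> Rf + pf + 2"
  proof -
    have "K * \<mu> \<le> K * 1" by (rule mult_left_mono[OF \<mu>0(2) K0])
    then show ?thesis using K\<mu> by simp
  qed
  have Km: "K * (m/2) powr \<delta> \<ge> Rf + pf + 2"
  proof -
    have "K * \<mu> \<le> K * (m/2) powr \<delta>" by (rule mult_left_mono[OF \<mu>0(3) K0])
    then show ?thesis using K\<mu> by simp
  qed
  obtain F where F: "finite F" "F \<subseteq> G" "\<forall>k\<in>G. (\<bar>ln (D k 0)\<bar> \<le> K \<and> Hol \<delta> (\<lambda>x. ln (D k x)) K)
           \<longrightarrow> (\<exists>k'\<in>F. \<forall>t\<in>II. k t = k' t)"
    using finite_reps[OF ca d(1) K0] by blast
  have "\<forall>k\<in>F. \<exists>\<eta>>0. \<forall>g\<in>Diff1d \<delta>. norm1d \<delta> (\<lambda>t. g t - f t) < \<eta> \<longrightarrow> \<bar>P g k - P f k\<bar> < \<epsilon>/2"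
  proof
    fix k assume "k \<in> F"
    then have "nice k" using F(2) niceG by blast
    then show "\<exists>\<eta>>0. \<forall>g\<in>Diff1d \<delta>. norm1d \<delta> (\<lambda>t. g t - f t) < \<eta> \<longrightarrow> \<bar>P g k - P f k\<bar> < \<epsilon>/2"
      using comp_cont[OF d _ f, of k "\<epsilon>/2"] e unfolding P_def by auto
  qed
  from finite_min_eta[OF F(1) this] obtain \<eta>4 where \<eta>4: "\<eta>4 > 0"
    "\<forall>k\<in>F. \<forall>g\<in>Diff1d \<delta>. norm1d \<delta> (\<lambda>t. g t - f t) < \<eta>4 \<longrightarrow> \<bar>P g k - P f k\<bar> < \<epsilon>/2" by blast
  define \<eta> where "\<eta> = min \<eta>1 (min \<eta>2 (min (m/2) \<eta>4))"
  have \<eta>0: "\<eta> > 0" unfolding \<eta>_def using \<eta>1 \<eta>2 \<eta>4 m by simp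
  show "\<exists>\<eta>>0. \<forall>g\<in>Diff1d \<delta>. norm1d \<delta> (\<lambda>t. g t - f t) < \<eta> \<longrightarrow> \<bar>r_delta \<delta> G g - r_delta \<delta> G f\<bar> < \<epsilon>"
  proof (intro exI[of _ \<eta>] conjI ballI impI \<eta>0)
    fix g assume g: "g \<in> Diff1d \<delta>" and n: "norm1d \<delta> (\<lambda>t. g t - f t) < \<eta>"
    have n1: "norm1d \<delta> (\<lambda>t. g t - f t) < \<eta>1" and n2: "norm1d \<delta> (\<lambda>t. g t - f t) < \<eta>2"
      and n3: "norm1d \<delta> (\<lambda>t. g t - f t) < m/2" and n4: "norm1d \<delta> (\<lambda>t. g t - f t) < \<eta>4"
      using n unfolding \<eta>_def by auto
    have up: "Inf (P g ` G) < Rf + \<epsilon>"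
    proof -
      have "Inf (P g ` G) \<le> P g k0" by (rule cInf_lower[OF _ bdd[OF g]]) (use k0 in blast)
      also have "\<dots> < P f k0 + \<epsilon>/2"
      proof -
        have "\<bar>P g k0 - P f k0\<bar> < \<epsilon>/2" using \<eta>1(2) g n1 by blast
        then show ?thesis unfolding abs_less_iff by linarith
      qed
      finally show ?thesis using k0(2) by linarith
    qed
    have pg: "\<bar>p_delta \<delta> g - pf\<bar> < 1" using \<eta>2(2) g n2 unfolding pf_def by blast
    have gI: "\<And>t. t \<in> II \<Longrightarrow> g t \<in> II" using Diff1d_facts(4)[OF g] by blast
    have Dgm: "m/2 \<le> D g t" if t: "t \<in> II" for t
      using close(1)[OF f g d(1) n3 t] m(2)[OF t] by linarith
    have bdda: "bdd_above (holder_quots \<delta> (\<lambda>t. ln (D g t)))"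
      using comp_bdd[OF nice_id g d] by simp
    have ha0: "0 \<le> hn \<delta> (\<lambda>t. ln (D g t))" by (rule hn_nonneg[OF bdda])
    have pgdef: "p_delta \<delta> g = \<bar>ln (D g 0)\<bar> + hn \<delta> (\<lambda>t. ln (D g t))" unfolding p_delta_def by simp
    have a0: "\<bar>ln (D g 0)\<bar> \<le> pf + 1" and ha: "hn \<delta> (\<lambda>t. ln (D g t)) \<le> pf + 1"
      using pg ha0 unfolding pgdef by (smt (verit) abs_ge_zero)+
    have low: "Rf - \<epsilon>/2 \<le> P g k" if k: "k \<in> G" for k
    proof (cases "\<bar>ln (D k 0)\<bar> \<le> K \<and> Hol \<delta> (\<lambda>x. ln (D k x)) K")
      case True
      then obtain k' where k': "k' \<in> F" "\<forall>t\<in>II. k t = k' t" using F(3) k by blast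
      have "P g k = P g k'" unfolding P_def by (rule p_cong) (use k'(2) gI in simp)
      moreover have "\<bar>P g k' - P f k'\<bar> < \<epsilon>/2" using \<eta>4(2) k'(1) g n4 by blast
      moreover have "Rf \<le> P f k'" using Rf_le k'(1) F(2) by blast
      ultimately show ?thesis by linarith
    next
      case False
      let ?A = "\<lambda>t. ln (D (\<lambda>x. k (g x)) t)" and ?a = "\<lambda>t. ln (D g t)" and ?u = "\<lambda>x. ln (D k x)"
      have bA: "bdd_above (holder_quots \<delta> ?A)" by (rule comp_bdd[OF niceG[OF k] g d])
      have hA0: "0 \<le> hn \<delta> ?A" by (rule hn_nonneg[OF bA])
      have Pdef: "P g k = \<bar>?A 0\<bar> + hn \<delta> ?A" unfolding P_def p_delta_def by simp
      have Adec: "?A t = ?u (g t) + ?a t" if "t \<in> II" for t by (rule lnD_comp[OF niceG[OF k] g that])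
      have big: "Rf + 1 \<le> P g k"
      proof (cases "\<bar>ln (D k 0)\<bar> \<le> K")
        case False
        have z: "(0::real) \<in> II" by simp
        have "?A 0 = ?u 0 + ?a 0" using Adec[OF z] Diff1d_facts(2)[OF g] by simp
        then have "\<bar>?A 0\<bar> \<ge> \<bar>?u 0\<bar> - \<bar>?a 0\<bar>" by linarith
        then show ?thesis using False a0 KK hA0 unfolding Pdef by linarith
      next
        case True
        then have "\<not> Hol \<delta> ?u K" using \<open>\<not> (\<bar>ln (D k 0)\<bar> \<le> K \<and> Hol \<delta> ?u K)\<close> by blast
        then obtain x1 x2 where x: "x1 \<in> II" "x2 \<in> II" "\<bar>?u x2 - ?u x1\<bar> > K * \<bar>x2 - x1\<bar> powr \<delta>"
          unfolding Hol_def by (auto simp: not_le)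
        obtain s1 where s1: "s1 \<in> II" "g s1 = x1" using Diff1d_facts(4)[OF g] x(1) by (metis imageE)
        obtain s2 where s2: "s2 \<in> II" "g s2 = x2" using Diff1d_facts(4)[OF g] x(2) by (metis imageE)
        have sne: "s1 \<noteq> s2" using x(3) s1 s2 by auto
        define dd where "dd = \<bar>s2 - s1\<bar> powr \<delta>"
        have dd0: "dd > 0" unfolding dd_def using sne by simp
        have hA: "\<bar>?A s2 - ?A s1\<bar> \<le> hn \<delta> ?A * dd"
          using hn_Hol[OF bA] s1(1) s2(1) unfolding Hol_def dd_def by blast
        have hav: "\<bar>?a s2 - ?a s1\<bar> \<le> hn \<delta> ?a * dd"
          using hn_Hol[OF bdda] s1(1) s2(1) unfolding Hol_def dd_def by blast
        have "?u x2 - ?u x1 = (?A s2 - ?a s2) - (?A s1 - ?a s1)"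
          using Adec[OF s1(1)] Adec[OF s2(1)] s1(2) s2(2) by simp
        then have "\<bar>?u x2 - ?u x1\<bar> \<le> hn \<delta> ?A * dd + hn \<delta> ?a * dd" using hA hav by linarith
        also have "\<dots> \<le> (P g k + pf + 1) * dd"
        proof -
          have "hn \<delta> ?A \<le> P g k" unfolding Pdef by simp
          then have "hn \<delta> ?A + hn \<delta> ?a \<le> P g k + pf + 1" using ha by linarith
          then show ?thesis using dd0 by (metis distrib_right less_imp_le mult_right_mono)
        qed
        finally have ub: "\<bar>?u x2 - ?u x1\<bar> \<le> (P g k + pf + 1) * dd" .
        have ml: "(m/2) * \<bar>s2 - s1\<bar> \<le> \<bar>x2 - x1\<bar>"
          using mvt_lower[of g "D g" "m/2" s1 s2] C1_deriv[OF Diff1d_facts(1)[OF g]] Dgm m(1) s1 s2 by auto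
        have "((m/2) * \<bar>s2 - s1\<bar>) powr \<delta> \<le> \<bar>x2 - x1\<bar> powr \<delta>"
          by (rule powr_mono2) (use ml m(1) d in auto)
        moreover have "((m/2) * \<bar>s2 - s1\<bar>) powr \<delta> = (m/2) powr \<delta> * dd"
          unfolding dd_def by (rule powr_mult)
        ultimately have "K * ((m/2) powr \<delta> * dd) \<le> K * \<bar>x2 - x1\<bar> powr \<delta>"
          using mult_left_mono[OF _ K0] by metis
        then have "(K * (m/2) powr \<delta>) * dd < (P g k + pf + 1) * dd" using x(3) ub by (simp add: mult.assoc)
        then have "K * (m/2) powr \<delta> < P g k + pf + 1" using dd0 by (simp add: mult_less_cancel_right)
        then show ?thesis using Km by linarith
      qed
      then show ?thesis using e by linarith
    qed
    have lowI: "Rf - \<epsilon>/2 \<le> Inf (P g ` G)" by (rule cInf_greatest) (use Gne low in auto)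
    show "\<bar>r_delta \<delta> G g - r_delta \<delta> G f\<bar> < \<epsilon>"
      using rr[OF g] rr[OF f] up lowI e unfolding Rf_def by (simp add: abs_less_iff)
  qed
qed

theorem mainTheorem16:
  fixes \<delta> :: real and G :: "(real \<Rightarrow> real) set"
  assumes "0 < \<delta>" and "\<delta> < 1/2"
    and "subgroup_Diff03 G"
    and "cond_a G"
  shows "cont_1d \<delta> (p_delta \<delta>) \<and> cont_1d \<delta> (r_delta \<delta> G)"
  using pcont[of \<delta>] rcont[of \<delta> G] assms by simp


end
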